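(* Let $d\ge2$, $b:=2^d$, $N\in\mathbb{N}$, and $L:=\min\{\ell\in\{0,1,2,\dots\}:b^\ell\ge N\}$. Then $2^{-L}\le N^{-1/d}\le2\cdot2^{-L}$. For every $\ell\in\{0,1,\dots,L-2\}$ and every word $u\in\{0,\dots,b-1\}^\ell$, \[ \Bigl\lfloor\frac{N}{b^\ell}\Bigr\rfloor\le M(u)\le\Bigl\lceil\frac{N}{b^\ell}\Bigr\rceil. \] If $N>b^2$, then $M(u)\ge b$ for all words $u$ of length $L-2$.
   Context: $M(u):=\#\{1\le n\le N:x_n\in C_u\}$, where $(x_n)$ is the dyadic digital sequence and $C_u$ the dyadic cube defined as follows. For $a\in\{0,\dots,b-1\}$ write $a=\sum_{j=1}^d\varepsilon_j(a)2^{j-1}$ with $\varepsilon_j(a)\in\{0,1\}$; for $m\ge0$ write $m=\sum_{k\ge0}a_k(m)b^k$ with base-$b$ digits, all but finitely many zero. Set $x_n:=\bigl(\sum_{k\ge0}\varepsilon_1(a_k(n-1))2^{-(k+1)},\dots,\sum_{k\ge0}\varepsilon_d(a_k(n-1))2^{-(k+1)}\bigr)$, $n\ge1$. For $u=(u_0,\dots,u_{\ell-1})$, $C_u:=\prod_{j=1}^d\bigl[\sum_{k=0}^{\ell-1}\varepsilon_j(u_k)2^{-(k+1)},\sum_{k=0}^{\ell-1}\varepsilon_j(u_k)2^{-(k+1)}+2^{-\ell}\bigr)$; for $\ell=0$ the empty word gives $C_\varnothing=[0,1)^d$. *)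

theory Defs
  imports Complex_Main
begin

definition eps :: "nat \<Rightarrow> nat \<Rightarrow> nat" where
  "eps j a = (a div 2 ^ (j - 1)) mod 2"

definition digit :: "nat \<Rightarrow> nat \<Rightarrow> nat \<Rightarrow> nat" where
  "digit b k m = (m div b ^ k) mod b"

(* j-th coordinate (j = 1..d) of x_n, n >= 1, in base b = 2^d;
   the sum ranges over the finitely many nonzero digits (zero digits contribute 0) *)
definition xseq :: "nat \<Rightarrow> nat \<Rightarrow> nat \<Rightarrow> real" where
  "xseq d n j = (\<Sum>k\<in>{k. digit (2^d) k (n - 1) \<noteq> 0}.
                   real (eps j (digit (2^d) k (n - 1))) / 2 ^ (k + 1))"

definition cube_lo :: "nat list \<Rightarrow> nat \<Rightarrow> real" where
  "cube_lo u j = (\<Sum>k<length u. real (eps j (u ! k)) / 2 ^ (k + 1))"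

definition in_cube :: "nat \<Rightarrow> nat list \<Rightarrow> (nat \<Rightarrow> real) \<Rightarrow> bool" where
  "in_cube d u x \<longleftrightarrow> (\<forall>j\<in>{1..d}. cube_lo u j \<le> x j \<and> x j < cube_lo u j + 1 / 2 ^ length u)"

definition M :: "nat \<Rightarrow> nat \<Rightarrow> nat list \<Rightarrow> nat" where
  "M d N u = card {n \<in> {1..N}. in_cube d u (xseq d n)}"

end

theory Submission
  imports Defs
begin

fun val :: "nat \<Rightarrow> nat list \<Rightarrow> nat" where
  "val b [] = 0"
| "val b (a # w) = a + b * val b w"

lemma val_less: "set u \<subseteq> {..<b} \<Longrightarrow> val b u < b ^ length u"
proof (induction u)
  case Nil then show ?case by simp
next
  case (Cons a w)
  then have "a < b" "val b w < b ^ length w" by auto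
  then have "a + b * val b w < b + b * val b w" by simp
  also have "\<dots> = b * Suc (val b w)" by simp
  also have "\<dots> \<le> b * b ^ length w"
    using \<open>val b w < b ^ length w\<close> by (intro mult_le_mono2) simp
  finally show ?case by simp
qed

lemma eps_1: "eps 1 a = a mod 2" by (simp add: eps_def)
lemma eps_Suc: assumes "j \<ge> 1" shows "eps (Suc j) a = eps j (a div 2)"
proof -
  have "(2::nat) ^ j = 2 * 2 ^ (j - 1)" using assms by (cases j) simp_all
  then show ?thesis by (simp add: eps_def div_mult2_eq)
qed

lemma eps_le1: "eps j a \<le> 1" by (simp add: eps_def)

lemma eps_inj: "a < 2 ^ d \<Longrightarrow> a' < 2 ^ d \<Longrightarrow> (\<forall>j\<in>{1..d}. eps j a = eps j a') \<Longrightarrow> a = a'"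
proof (induction d arbitrary: a a')
  case 0 then show ?case by simp
next
  case (Suc d)
  have "eps 1 a = eps 1 a'" using Suc.prems(3) by auto
  then have h1: "a mod 2 = a' mod 2" by (simp add: eps_def)
  have "\<forall>j\<in>{1..d}. eps j (a div 2) = eps j (a' div 2)"
  proof
    fix j assume "j \<in> {1..d}"
    then have "Suc j \<in> {1..Suc d}" "j \<ge> 1" by auto
    then have "eps (Suc j) a = eps (Suc j) a'" using Suc.prems(3) by blast
    then show "eps j (a div 2) = eps j (a' div 2)"
      using eps_Suc[OF \<open>j \<ge> 1\<close>] by simp
  qed
  moreover have "a div 2 < 2 ^ d" "a' div 2 < 2 ^ d" using Suc.prems(1,2) by auto
  ultimately have "a div 2 = a' div 2" using Suc.IH by blast
  have "a = 2 * (a div 2) + a mod 2" "a' = 2 * (a' div 2) + a' mod 2" by simp_all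
  with h1 \<open>a div 2 = a' div 2\<close> show ?case by simp
qed

definition X :: "nat \<Rightarrow> nat \<Rightarrow> nat \<Rightarrow> real" where
  "X b j m = (\<Sum>k\<in>{k. digit b k m \<noteq> 0}. real (eps j (digit b k m)) / 2 ^ (k + 1))"

lemma eps_0: "eps j 0 = 0" by (simp add: eps_def)

lemma X_K:
  assumes "b \<ge> 2" "m < b ^ K"
  shows "X b j m = (\<Sum>k<K. real (eps j (digit b k m)) / 2 ^ (k + 1))"
  unfolding X_def
proof (rule sum.mono_neutral_left)
  show "finite {..<K}" by simp
  show "{k. digit b k m \<noteq> 0} \<subseteq> {..<K}"
  proof
    fix k assume k: "k \<in> {k. digit b k m \<noteq> 0}"
    show "k \<in> {..<K}"
    proof (rule ccontr)
      assume "k \<notin> {..<K}"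
      then have "K \<le> k" by simp
      then have "b ^ K \<le> b ^ k" using assms(1) by (simp add: power_increasing)
      then have "m div b ^ k = 0" using assms(2) by simp
      then show False using k by (simp add: digit_def)
    qed
  qed
  show "\<forall>i\<in>{..<K} - {k. digit b k m \<noteq> 0}. real (eps j (digit b i m)) / 2 ^ (i + 1) = 0"
    by (simp add: eps_0)
qed

lemma digit_Suc: "digit b (Suc k) m = digit b k (m div b)"
  by (simp add: digit_def div_mult2_eq)

lemma X_rec:
  assumes "b \<ge> 2"
  shows "X b j m = real (eps j (m mod b)) / 2 + X b j (m div b) / 2"
proof -
  have "m < 2 ^ m" by (rule less_exp)
  also have "(2::nat) ^ m \<le> b ^ m" using assms by (rule power_mono) simp
  also have "b ^ m \<le> b ^ Suc m" using assms by (intro power_increasing) auto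
  finally have m1: "m < b ^ Suc m" .
  then have m2: "m div b < b ^ m" using assms
    by (simp add: div_less_iff_less_mult mult.commute)
  have "X b j m = (\<Sum>k<Suc m. real (eps j (digit b k m)) / 2 ^ (k + 1))"
    using X_K[OF assms m1] .
  also have "\<dots> = real (eps j (digit b 0 m)) / 2 + (\<Sum>k<m. real (eps j (digit b (Suc k) m)) / 2 ^ (Suc k + 1))"
    by (subst sum.lessThan_Suc_shift) simp
  also have "(\<Sum>k<m. real (eps j (digit b (Suc k) m)) / 2 ^ (Suc k + 1))
      = (\<Sum>k<m. real (eps j (digit b k (m div b))) / 2 ^ (k + 1)) / 2"
    by (simp add: digit_Suc sum_divide_distrib)
  also have "(\<Sum>k<m. real (eps j (digit b k (m div b))) / 2 ^ (k + 1)) = X b j (m div b)"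
    using X_K[OF assms m2] by simp
  finally show ?thesis by (simp add: digit_def)
qed

lemma X_bounds:
  assumes "b \<ge> 2"
  shows "0 \<le> X b j m \<and> X b j m < 1"
proof (induction m rule: less_induct)
  case (less m)
  show ?case
  proof (cases "m = 0")
    case True
    then show ?thesis by (simp add: X_def digit_def)
  next
    case False
    then have "m div b < m" using assms by simp
    with less have ih: "0 \<le> X b j (m div b)" "X b j (m div b) < 1" by auto
    have "real (eps j (m mod b)) \<le> 1" using eps_le1 by simp
    then show ?thesis using X_rec[OF assms, of j m] ih by simp
  qed
qed

lemma cube_lo_Nil: "cube_lo [] j = 0" by (simp add: cube_lo_def)

lemma cube_lo_Cons: "cube_lo (a # w) j = real (eps j a) / 2 + cube_lo w j / 2"
  unfolding cube_lo_def length_Cons sum.lessThan_Suc_shift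
  by (simp add: sum_divide_distrib del: sum.lessThan_Suc)

lemma cube_lo_nonneg: "0 \<le> cube_lo w j"
  unfolding cube_lo_def by (intro sum_nonneg) simp

lemma cube_lo_le: "cube_lo w j + 1 / 2 ^ length w \<le> 1"
proof (induction w)
  case Nil then show ?case by (simp add: cube_lo_Nil)
next
  case (Cons a w)
  have "real (eps j a) \<le> 1" using eps_le1 by simp
  then show ?case using Cons by (simp add: cube_lo_Cons)
qed

lemma key:
  fixes e e' :: nat and lo y t :: real
  assumes "e \<le> 1" "e' \<le> 1" "0 \<le> y" "y < 1" "lo + t \<le> 1" "t > 0" "0 \<le> lo"
  shows "(real e / 2 + lo / 2 \<le> real e' / 2 + y / 2 \<and> real e' / 2 + y / 2 < real e / 2 + lo / 2 + t / 2)
     \<longleftrightarrow> (e = e' \<and> lo \<le> y \<and> y < lo + t)"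
proof -
  have "e = 0 \<or> e = 1" "e' = 0 \<or> e' = 1" using assms by auto
  then show ?thesis using assms by (elim disjE) (auto simp: field_simps)
qed

lemma mod_split:
  fixes a b m q v :: nat
  assumes "a < b" "0 < b"
  shows "(m mod (b * q) = a + b * v) \<longleftrightarrow> (a = m mod b \<and> (m div b) mod q = v)"
proof -
  have e: "m mod (b * q) = b * ((m div b) mod q) + m mod b" by (rule mod_mult2_eq)
  have "m mod b < b" using assms by simp
  show ?thesis
  proof
    assume h: "m mod (b * q) = a + b * v"
    then have "a + b * v = m mod b + b * ((m div b) mod q)" using e by simp
    then have "(a + b * v) mod b = (m mod b + b * ((m div b) mod q)) mod b"
      "(a + b * v) div b = (m mod b + b * ((m div b) mod q)) div b" by auto
    then show "a = m mod b \<and> (m div b) mod q = v" using assms by auto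
  next
    assume "a = m mod b \<and> (m div b) mod q = v"
    then show "m mod (b * q) = a + b * v" using e by simp
  qed
qed

lemma in_cube_iff:
  assumes "d \<ge> 1" "b = 2 ^ d" "set u \<subseteq> {..<b}"
  shows "in_cube d u (\<lambda>j. X b j m) \<longleftrightarrow> m mod b ^ length u = val b u"
  using assms(3)
proof (induction u arbitrary: m)
  have b2: "b \<ge> 2" using assms(1,2)
  proof -
    have "(2::nat) ^ 1 \<le> 2 ^ d" using assms(1) by (intro power_increasing) auto
    then show ?thesis using assms(2) by simp
  qed
  {
  case Nil
  then show ?case using X_bounds[OF b2] by (simp add: in_cube_def cube_lo_Nil)
  next
  case (Cons a w)
  have a: "a < b" "set w \<subseteq> {..<b}" using Cons.prems by auto
  have "in_cube d (a # w) (\<lambda>j. X b j m) \<longleftrightarrow>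
     (\<forall>j\<in>{1..d}. eps j a = eps j (m mod b) \<and> cube_lo w j \<le> X b j (m div b)
        \<and> X b j (m div b) < cube_lo w j + 1 / 2 ^ length w)"
    unfolding in_cube_def
  proof (intro ball_cong refl)
    fix j
    have "real (eps j a) / 2 + cube_lo w j / 2 \<le> real (eps j (m mod b)) / 2 + X b j (m div b) / 2 \<and>
       real (eps j (m mod b)) / 2 + X b j (m div b) / 2 < real (eps j a) / 2 + cube_lo w j / 2 + (1 / 2 ^ length w) / 2
      \<longleftrightarrow> (eps j a = eps j (m mod b) \<and> cube_lo w j \<le> X b j (m div b)
        \<and> X b j (m div b) < cube_lo w j + 1 / 2 ^ length w)"
      by (rule key) (use eps_le1 X_bounds[OF b2] cube_lo_le cube_lo_nonneg in auto)
    then show "(cube_lo (a # w) j \<le> X b j m \<and> X b j m < cube_lo (a # w) j + 1 / 2 ^ length (a # w)) =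
         (eps j a = eps j (m mod b) \<and> cube_lo w j \<le> X b j (m div b) \<and> X b j (m div b) < cube_lo w j + 1 / 2 ^ length w)"
      by (simp add: cube_lo_Cons X_rec[OF b2, of j m] mult.commute)
  qed
  also have "\<dots> \<longleftrightarrow> (\<forall>j\<in>{1..d}. eps j a = eps j (m mod b)) \<and> in_cube d w (\<lambda>j. X b j (m div b))"
    unfolding in_cube_def by auto
  also have "\<dots> \<longleftrightarrow> a = m mod b \<and> (m div b) mod b ^ length w = val b w"
  proof -
    have "(\<forall>j\<in>{1..d}. eps j a = eps j (m mod b)) \<longleftrightarrow> a = m mod b"
      using eps_inj[of a d "m mod b"] a(1) assms(2) b2 by auto
    then show ?thesis using Cons.IH[OF a(2)] by simp
  qed
  also have "\<dots> \<longleftrightarrow> m mod b ^ length (a # w) = val b (a # w)"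
    using mod_split[OF a(1), of m "b ^ length w" "val b w"] b2 by simp
  finally show ?case .
  }
qed


lemma count_formula:
  assumes "0 < q" "v < q"
  shows "card {m. m < N \<and> m mod q = v} = N div q + (if v < N mod q then 1 else 0)"
proof (induction N)
  case 0 then show ?case by simp
next
  case (Suc N)
  have e: "{m. m < Suc N \<and> m mod q = v} =
      (if N mod q = v then insert N {m. m < N \<and> m mod q = v} else {m. m < N \<and> m mod q = v})"
    by (auto simp: less_Suc_eq)
  have c: "card {m. m < Suc N \<and> m mod q = v} = card {m. m < N \<and> m mod q = v} + (if N mod q = v then 1 else 0)"
    unfolding e by (simp add: card_insert_disjoint)
  have "N mod q < q" using assms by simp
  then show ?case unfolding c Suc.IH using assms
    by (auto simp: mod_Suc div_Suc)
qed

lemma count_bounds: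
  assumes "0 < q" "v < q"
  shows "\<lfloor>real N / real q\<rfloor> \<le> int (card {m. m < N \<and> m mod q = v}) \<and>
         int (card {m. m < N \<and> m mod q = v}) \<le> \<lceil>real N / real q\<rceil>"
proof -
  have fl: "\<lfloor>real N / real q\<rfloor> = int (N div q)" by (rule floor_divide_of_nat_eq)
  have rn: "real N = real (N div q) * real q + real (N mod q)"
  proof -
    have "real N = real (N div q * q + N mod q)" by simp
    then show ?thesis by (simp only: of_nat_add of_nat_mult)
  qed
  have "real N / real q = real (N div q) + real (N mod q) / real q"
    using assms rn by (simp add: field_simps)
  show ?thesis
  proof (cases "v < N mod q")
    case True
    then have "0 < real (N mod q) / real q" using assms by simp
    then have "real (N div q) < real N / real q"
      using \<open>real N / real q = _\<close> by linarith
    then have "int (N div q) + 1 \<le> \<lceil>real N / real q\<rceil>"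
      by (simp add: le_ceiling_iff)
    then show ?thesis using count_formula[OF assms, of N] True fl by simp
  next
    case False
    have "\<lfloor>real N / real q\<rfloor> \<le> \<lceil>real N / real q\<rceil>" by (rule floor_le_ceiling)
    then show ?thesis using count_formula[OF assms, of N] False fl by simp
  qed
qed

lemma M_eq:
  assumes "d \<ge> 1" "set u \<subseteq> {..<2 ^ d}"
  shows "M d N u = card {m. m < N \<and> m mod (2 ^ d) ^ length u = val (2 ^ d) u}"
proof -
  have xs: "xseq d n = (\<lambda>j. X (2 ^ d) j (n - 1))" for n
    by (simp add: xseq_def X_def fun_eq_iff)
  have "{n \<in> {1..N}. in_cube d u (xseq d n)} = Suc ` {m. m < N \<and> m mod (2 ^ d) ^ length u = val (2 ^ d) u}"
  proof -
    have "{n \<in> {1..N}. in_cube d u (xseq d n)} = {n \<in> {1..N}. (n - 1) mod (2 ^ d) ^ length u = val (2 ^ d) u}"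
      using in_cube_iff[OF assms(1) refl assms(2)] xs by simp
    also have "\<dots> = Suc ` {m. m < N \<and> m mod (2 ^ d) ^ length u = val (2 ^ d) u}"
    proof (rule set_eqI, rule iffI)
      fix n assume "n \<in> {n \<in> {1..N}. (n - 1) mod (2 ^ d) ^ length u = val (2 ^ d) u}"
      then show "n \<in> Suc ` {m. m < N \<and> m mod (2 ^ d) ^ length u = val (2 ^ d) u}"
        by (intro image_eqI[of n Suc "n - 1"]) auto
    qed auto
    finally show ?thesis .
  qed
  then show ?thesis unfolding M_def by (simp add: card_image)
qed

lemma rootpow:
  assumes "d > 0"
  shows "(real ((2::nat) ^ (d * k))) powr (1 / real d) = 2 ^ k"
proof -
  have "(2::real) powr real (d * k) = 2 ^ (d * k)" by (rule powr_realpow) simp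
  then have "real ((2::nat) ^ (d * k)) = 2 powr (real (d * k))" by simp
  then have "(real ((2::nat) ^ (d * k))) powr (1 / real d) = 2 powr (real (d * k) * (1 / real d))"
    by (simp add: powr_powr)
  also have "real (d * k) * (1 / real d) = real k" using assms by simp
  finally show ?thesis by (simp add: powr_realpow)
qed

theorem lemma2p6:
  fixes d N :: nat
  assumes "d \<ge> 2" and "N \<ge> 1"
  defines "b \<equiv> (2::nat) ^ d"
  defines "L \<equiv> (LEAST l::nat. b ^ l \<ge> N)"
  shows "((1/2::real) ^ L \<le> real N powr (- 1 / real d) \<and>
         real N powr (- 1 / real d) \<le> 2 * (1/2::real) ^ L) \<and>
        (\<forall>l u. l + 2 \<le> L \<longrightarrow> length u = l \<longrightarrow> set u \<subseteq> {..<b} \<longrightarrow>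
           \<lfloor>real N / real b ^ l\<rfloor> \<le> int (M d N u) \<and>
           int (M d N u) \<le> \<lceil>real N / real b ^ l\<rceil>) \<and>
        (N > b ^ 2 \<longrightarrow>
           (\<forall>u. length u = L - 2 \<longrightarrow> set u \<subseteq> {..<b} \<longrightarrow> M d N u \<ge> b))"
proof -
  have d1: "d \<ge> 1" "d > 0" using assms(1) by auto
  have b2: "b \<ge> 2" unfolding b_def
  proof -
    have "(2::nat) ^ 1 \<le> 2 ^ d" using d1 by (intro power_increasing) auto
    then show "2 \<le> (2::nat) ^ d" by simp
  qed
  have "N < 2 ^ N" by (rule less_exp)
  also have "(2::nat) ^ N \<le> b ^ N" using b2 by (rule power_mono) simp
  finally have ex: "N \<le> b ^ N" by simp
  have hL: "N \<le> b ^ L" unfolding L_def by (rule LeastI[of _ N]) (rule ex)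
  have hL2: "b ^ (L - 1) < N" if "L > 0"
  proof -
    have "L - 1 < L" using that by simp
    then have "\<not> N \<le> b ^ (L - 1)" unfolding L_def by (rule not_less_Least)
    then show ?thesis by simp
  qed
  have bpow: "b ^ k = 2 ^ (d * k)" for k unfolding b_def by (simp add: power_mult)
  have np: "real N powr (- 1 / real d) = 1 / real N powr (1 / real d)"
    by (simp add: powr_minus_divide[symmetric])
  have pos: "0 < real N powr (1 / real d)" using assms(2) by simp
  have P1a: "(1/2::real) ^ L \<le> real N powr (- 1 / real d)"
  proof -
    have "real N powr (1 / real d) \<le> (real (b ^ L)) powr (1 / real d)"
      using hL by (intro powr_mono2) auto
    also have "\<dots> = 2 ^ L" unfolding bpow by (rule rootpow[OF d1(2)])
    finally have "real N powr (1 / real d) \<le> 2 ^ L" .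
    then have "1 / 2 ^ L \<le> 1 / real N powr (1 / real d)"
      using pos by (intro divide_left_mono) auto
    then show ?thesis unfolding np by (simp add: power_one_over)
  qed
  have P1b: "real N powr (- 1 / real d) \<le> 2 * (1/2::real) ^ L"
  proof (cases "L = 0")
    case True
    then have "N = 1" using hL assms(2) by simp
    then show ?thesis using True by simp
  next
    case False
    have "(2::real) ^ (L - 1) = (real (b ^ (L - 1))) powr (1 / real d)"
      unfolding bpow by (rule rootpow[OF d1(2), symmetric])
    also have "\<dots> \<le> real N powr (1 / real d)"
      using hL2 False by (intro powr_mono2) auto
    finally have "(2::real) ^ (L - 1) \<le> real N powr (1 / real d)" .
    then have "1 / real N powr (1 / real d) \<le> 1 / 2 ^ (L - 1)"
      using pos by (intro divide_left_mono) auto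
    also have "(1::real) / 2 ^ (L - 1) = 2 * (1/2) ^ L"
    proof -
      obtain k where k: "L = Suc k" using False by (cases L) auto
      then have "(1/2::real) ^ L = (1/2) * (1/2) ^ (L - 1)" by simp
      then show ?thesis by (simp add: power_one_over)
    qed
    finally show ?thesis unfolding np .
  qed
  have P2: "\<lfloor>real N / real b ^ l\<rfloor> \<le> int (M d N u) \<and> int (M d N u) \<le> \<lceil>real N / real b ^ l\<rceil>"
    if "length u = l" "set u \<subseteq> {..<b}" for l u
  proof -
    have q: "0 < b ^ l" using b2 by simp
    have v: "val b u < b ^ l" using val_less[OF that(2)] that(1) by simp
    have "M d N u = card {m. m < N \<and> m mod b ^ l = val b u}"
      using M_eq[OF d1(1), of u N] that unfolding b_def by simp
    then show ?thesis using count_bounds[OF q v, of N] by simp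
  qed
  have P3: "M d N u \<ge> b" if "N > b ^ 2" "length u = L - 2" "set u \<subseteq> {..<b}" for u
  proof -
    have "L \<ge> 3"
    proof (rule ccontr)
      assume "\<not> L \<ge> 3"
      then have "b ^ L \<le> b ^ 2" using b2 by (intro power_increasing) auto
      then show False using hL that(1) by simp
    qed
    then have "b ^ (L - 1) = b * b ^ (L - 2)"
    proof -
      have "L - 1 = Suc (L - 2)" using \<open>L \<ge> 3\<close> by simp
      then show ?thesis by simp
    qed
    then have "b * b ^ (L - 2) < N" using hL2 \<open>L \<ge> 3\<close> by simp
    then have "real b * real b ^ (L - 2) \<le> real N"
    proof -
      have "real (b * b ^ (L - 2)) \<le> real N" unfolding of_nat_le_iff
        using \<open>b * b ^ (L - 2) < N\<close> by (rule less_imp_le)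
      then show ?thesis by (simp only: of_nat_mult of_nat_power)
    qed
    then have "real b \<le> real N / real b ^ (L - 2)" using b2 by (simp add: field_simps)
    then have "int b \<le> \<lfloor>real N / real b ^ (L - 2)\<rfloor>" by (simp add: le_floor_iff)
    also have "\<dots> \<le> int (M d N u)" using P2[OF that(2,3)] by simp
    finally show ?thesis by simp
  qed
  show ?thesis using P1a P1b P2 P3 by blast
qed

end
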